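(* Every multiplicative generalized seminorm $\mathbb{Z}\to R$ with $R$ of tempered growth is multiplicatively equivalent to one of the following: the $p$-adic seminorm $|\cdot|_p$ for a prime $p$; the $p$-residual seminorm $|\cdot|_{p,0}$ for a prime $p$; the trivial norm $|\cdot|_0$; the archimedean norm $|\cdot|_\infty$. Thus $$\mathrm{Speh}^m(\mathbb{Z})=\{|\cdot|_p,|\cdot|_{p,0}: p\text{ prime}\}\cup\{|\cdot|_0\}\cup\{|\cdot|_\infty\}.$$ Moreover, the natural map $\mathcal{M}(\mathbb{Z})\to\mathrm{Speh}^m(\mathbb{Z})$, sending a multiplicative $\mathbb{R}_+$-valued seminorm to its multiplicative equivalence class, is surjective.
   Context: Halo: commutative unital semiring with a partial order compatible with $+$ and $\cdot$; halo morphism: increasing $f$ with $f(0)=0,f(1)=1$, $f(a+b)\le f(a)+f(b)$, $f(ab)\le f(a)f(b)$; rings carry the trivial order. An aura is a halo whose semiring is a semifield; positive means $0<1$. A generalized seminorm on a ring $A$ is a halo morphism to a positive totally ordered aura $R$; multiplicative if $|ab|=|a||b|$; tempered if $R$ has tempered growth: for every non-zero $P\in\mathbb{N}[X]$ and $x\in R$, ($x^n\le P(n)$ for all $n$) implies $x\le1$. Two seminorms $|\cdot|_1,|\cdot|_2$ on $A$ are multiplicatively equivalent if for all $a,b,c\in A$: $|a|_1|c|_1\le|b|_1\iff|a|_2|c|_2\le|b|_2$. A place is a multiplicative equivalence class of generalized seminorms; $\mathrm{Speh}^m(A)$ is the set of places represented by tempered multiplicative seminorms. $\mathcal{M}(\mathbb{Z})$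 is the set of multiplicative seminorms $\mathbb{Z}\to\mathbb{R}_+$ (with usual order; $\mathbb{R}_+$ has tempered growth). Here $|n|_p=p^{-\mathrm{ord}_p(n)}$ ($|0|_p=0$); $|n|_{p,0}=0$ if $p\mid n$ and $1$ otherwise, valued in $\{0,1\}$ with $1+1=1$; $|n|_0=1$ for $n\neq0$, $|0|_0=0$; $|n|_\infty=\max(n,-n)$. *)

theory Defs
  imports "HOL-Computational_Algebra.Polynomial" "HOL-Computational_Algebra.Primes"
begin

class tot_aura = comm_semiring_1 + linorder +
  assumes aura_add_mono: "a \<le> b \<Longrightarrow> a + c \<le> b + c"
  and aura_mult_mono: "a \<le> b \<Longrightarrow> a * c \<le> b * c"
  and aura_semifield: "a \<noteq> 0 \<Longrightarrow> \<exists>b. a * b = 1"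
  and aura_positive: "0 < 1"

definition tempered_growth :: "'r::tot_aura itself \<Rightarrow> bool" where
  "tempered_growth _ \<longleftrightarrow>
     (\<forall>(P::nat poly) (x::'r). P \<noteq> 0 \<longrightarrow> (\<forall>n. x ^ n \<le> of_nat (poly P n)) \<longrightarrow> x \<le> 1)"

text \<open>Halo morphism from a ring (trivial order, so monotonicity is vacuous)
into a positive totally ordered aura.\<close>

definition gen_seminorm :: "('a::comm_ring_1 \<Rightarrow> 'r::tot_aura) \<Rightarrow> bool" where
  "gen_seminorm f \<longleftrightarrow> f 0 = 0 \<and> f 1 = 1 \<and>
     (\<forall>a b. f (a + b) \<le> f a + f b) \<and> (\<forall>a b. f (a * b) \<le> f a * f b)"

definition mult_seminorm :: "('a::comm_ring_1 \<Rightarrow> 'r::tot_aura) \<Rightarrow> bool" where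
  "mult_seminorm f \<longleftrightarrow> gen_seminorm f \<and> (\<forall>a b. f (a * b) = f a * f b)"

definition mult_equiv :: "('a \<Rightarrow> 'r::{times,ord}) \<Rightarrow> ('a \<Rightarrow> 's::{times,ord}) \<Rightarrow> bool" where
  "mult_equiv f g \<longleftrightarrow> (\<forall>a b c. f a * f c \<le> f b \<longleftrightarrow> g a * g c \<le> g b)"

typedef nnreal = "{x::real. 0 \<le> x}" morphisms nn_val nn_of
  by auto

setup_lifting type_definition_nnreal

instantiation nnreal :: "{comm_semiring_1, linorder}"
begin
lift_definition zero_nnreal :: nnreal is 0 by simp
lift_definition one_nnreal :: nnreal is 1 by simp
lift_definition plus_nnreal :: "nnreal \<Rightarrow> nnreal \<Rightarrow> nnreal" is "(+)" by simp
lift_definition times_nnreal :: "nnreal \<Rightarrow> nnreal \<Rightarrow> nnreal" is "(*)" by simp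
lift_definition less_eq_nnreal :: "nnreal \<Rightarrow> nnreal \<Rightarrow> bool" is "(\<le>)" .
lift_definition less_nnreal :: "nnreal \<Rightarrow> nnreal \<Rightarrow> bool" is "(<)" .
instance
  by standard (transfer; auto simp: algebra_simps)+
end

instance nnreal :: tot_aura
proof
  fix a b c :: nnreal
  show "a \<le> b \<Longrightarrow> a + c \<le> b + c" by transfer simp
  show "a \<le> b \<Longrightarrow> a * c \<le> b * c" by transfer (simp add: mult_right_mono)
  show "a \<noteq> 0 \<Longrightarrow> \<exists>b. a * b = 1"
  proof transfer
    fix a :: real assume "0 \<le> a" "a \<noteq> 0"
    then show "\<exists>b\<in>{x. 0 \<le> x}. a * b = 1" by (intro bexI[of _ "inverse a"]) auto
  qed
  show "(0::nnreal) < 1" by transfer simp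
qed

datatype bsf = B0 | B1

instantiation bsf :: "{comm_semiring_1, linorder}"
begin
definition "0 = B0"
definition "1 = B1"
fun plus_bsf :: "bsf \<Rightarrow> bsf \<Rightarrow> bsf" where
  "plus_bsf B0 y = y" | "plus_bsf B1 y = B1"
fun times_bsf :: "bsf \<Rightarrow> bsf \<Rightarrow> bsf" where
  "times_bsf B0 y = B0" | "times_bsf B1 y = y"
definition less_eq_bsf :: "bsf \<Rightarrow> bsf \<Rightarrow> bool" where
  "less_eq_bsf x y \<longleftrightarrow> x = B0 \<or> y = B1"
definition less_bsf :: "bsf \<Rightarrow> bsf \<Rightarrow> bool" where
  "less_bsf x y \<longleftrightarrow> x = B0 \<and> y = B1"
instance
proof
  fix a b c :: bsf
  show "a + b + c = a + (b + c)" by (cases a; cases b; cases c) auto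
  show "a + b = b + a" by (cases a; cases b) auto
  show "0 + a = a" by (simp add: zero_bsf_def)
  show "a * b * c = a * (b * c)" by (cases a; cases b; cases c) auto
  show "a * b = b * a" by (cases a; cases b) auto
  show "1 * a = a" by (simp add: one_bsf_def)
  show "(a + b) * c = a * c + b * c" by (cases a; cases b; cases c) auto
  show "0 * a = 0" by (simp add: zero_bsf_def)
  show "a * 0 = 0" by (cases a) (auto simp: zero_bsf_def)
  show "(0::bsf) \<noteq> 1" by (simp add: zero_bsf_def one_bsf_def)
  show "(a < b) = (a \<le> b \<and> \<not> b \<le> a)" by (cases a; cases b) (auto simp: less_eq_bsf_def less_bsf_def)
  show "a \<le> a" by (cases a) (auto simp: less_eq_bsf_def)
  show "a \<le> b \<Longrightarrow> b \<le> c \<Longrightarrow> a \<le> c" by (cases a; cases b; cases c) (auto simp: less_eq_bsf_def)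
  show "a \<le> b \<Longrightarrow> b \<le> a \<Longrightarrow> a = b" by (cases a; cases b) (auto simp: less_eq_bsf_def)
  show "a \<le> b \<or> b \<le> a" by (cases a; cases b) (auto simp: less_eq_bsf_def)
qed
end

instance bsf :: tot_aura
proof
  fix a b c :: bsf
  show "a \<le> b \<Longrightarrow> a + c \<le> b + c" by (cases a; cases b; cases c) (auto simp: less_eq_bsf_def)
  show "a \<le> b \<Longrightarrow> a * c \<le> b * c" by (cases a; cases b; cases c) (auto simp: less_eq_bsf_def)
  show "a \<noteq> 0 \<Longrightarrow> \<exists>b. a * b = 1" by (cases a) (auto simp: zero_bsf_def one_bsf_def)
  show "(0::bsf) < 1" by (simp add: zero_bsf_def one_bsf_def less_bsf_def)
qed

definition padic_abs :: "nat \<Rightarrow> int \<Rightarrow> nnreal" where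
  "padic_abs p n = nn_of (if n = 0 then 0 else inverse (real p ^ multiplicity (int p) n))"

definition residual_abs :: "nat \<Rightarrow> int \<Rightarrow> bsf" where
  "residual_abs p n = (if int p dvd n then B0 else B1)"

definition trivial_abs :: "int \<Rightarrow> nnreal" where
  "trivial_abs n = (if n = 0 then 0 else 1)"

definition arch_abs :: "int \<Rightarrow> nnreal" where
  "arch_abs n = nn_of (real_of_int (max n (- n)))"

end

theory Submission
  imports Defs "HOL-Real_Asymp.Real_Asymp"
begin

context tot_aura
begin

subclass ordered_comm_semiring
proof
  fix a b c :: 'a
  show "a \<le> b \<Longrightarrow> c + a \<le> c + b" using aura_add_mono[of a b c] by (simp add: add.commute)
  show "a \<le> b \<Longrightarrow> 0 \<le> c \<Longrightarrow> c * a \<le> c * b" using aura_mult_mono[of a b c] by (simp add: mult.commute)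
qed

lemma ta_nonneg: "0 \<le> x"
proof (rule ccontr)
  assume "\<not> 0 \<le> x"
  hence "x \<le> 0" by auto
  from aura_positive have "0 \<le> 1" by simp
  from aura_mult_mono[OF this, of x] have "0 \<le> x" by simp
  with \<open>\<not> 0 \<le> x\<close> show False by simp
qed

lemma ta_mult_left_mono: "a \<le> b \<Longrightarrow> c * a \<le> c * b"
  using aura_mult_mono[of a b c] by (simp add: mult.commute)

lemma ta_mult_mono2: "a \<le> b \<Longrightarrow> c \<le> d \<Longrightarrow> a * c \<le> b * d"
  by (meson aura_mult_mono ta_mult_left_mono order_trans)

lemma ta_add_mono2: "a \<le> b \<Longrightarrow> c \<le> d \<Longrightarrow> a + c \<le> b + d"
  by (metis aura_add_mono add.commute order_trans)

lemma ta_le_add: "a \<le> a + b"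
  using ta_add_mono2[of a a 0 b] ta_nonneg[of b] by simp

lemma ta_power_mono: "a \<le> b \<Longrightarrow> a ^ n \<le> b ^ n"
  by (induction n) (auto intro: ta_mult_mono2)

lemma ta_inv: "a \<noteq> 0 \<Longrightarrow> \<exists>b. a * b = 1"
  by (rule aura_semifield)

lemma ta_cancel: "c \<noteq> 0 \<Longrightarrow> a * c \<le> b * c \<Longrightarrow> a \<le> b"
proof -
  assume "c \<noteq> 0" "a * c \<le> b * c"
  then obtain d where d: "c * d = 1" using aura_semifield by blast
  from aura_mult_mono[OF \<open>a * c \<le> b * c\<close>, of d] have "a * (c * d) \<le> b * (c * d)"
    by (simp add: mult.assoc)
  thus ?thesis using d by simp
qed

lemma ta_no_zero_div: "a * b = 0 \<Longrightarrow> a = 0 \<or> b = 0"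
proof (rule ccontr)
  assume "a * b = 0" "\<not> (a = 0 \<or> b = 0)"
  then obtain d where d: "a * d = 1" using aura_semifield by blast
  have "b = (a * d) * b" using d by simp
  also have "\<dots> = d * (a * b)" by (simp add: ac_simps)
  finally show False using \<open>a * b = 0\<close> \<open>\<not> (a = 0 \<or> b = 0)\<close> by simp
qed

lemma ta_power_nz: "a \<noteq> 0 \<Longrightarrow> a ^ n \<noteq> 0"
proof (induction n)
  case (Suc n) thus ?case using ta_no_zero_div[of a "a ^ n"] by (auto simp del: mult_eq_0_iff)
qed simp

lemma ta_of_nat_mono: "m \<le> n \<Longrightarrow> of_nat m \<le> (of_nat n :: 'a)"
proof (induction n)
  case 0 thus ?case by simp
next
  case (Suc n)
  show ?case
  proof (cases "m = Suc n")
    case False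
    hence "of_nat m \<le> (of_nat n :: 'a)" using Suc by simp
    also have "\<dots> \<le> of_nat n + 1" by (rule ta_le_add)
    finally show ?thesis by (simp add: add.commute)
  qed simp
qed

lemma ta_one_le_of_nat: "1 \<le> n \<Longrightarrow> 1 \<le> (of_nat n :: 'a)"
  using ta_of_nat_mono[of 1 n] by simp

lemma ta_power_le_one: "a \<le> 1 \<Longrightarrow> a ^ n \<le> 1"
  using ta_power_mono[of a 1 n] by simp

lemma ta_one_le_power: "1 \<le> a \<Longrightarrow> 1 \<le> a ^ n"
  using ta_power_mono[of 1 a n] by simp

lemma ta_power_le_mono: "1 \<le> a \<Longrightarrow> m \<le> n \<Longrightarrow> a ^ m \<le> a ^ n"
proof -
  assume "1 \<le> a" "m \<le> n"
  then obtain k where "n = m + k" by (metis le_add_diff_inverse)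
  hence "a ^ n = a ^ m * a ^ k" by (simp add: power_add)
  moreover have "a ^ m * 1 \<le> a ^ m * a ^ k"
    by (rule ta_mult_left_mono, rule ta_one_le_power) fact
  ultimately show ?thesis by simp
qed

lemma ta_power_strict_anti: "0 < c \<Longrightarrow> c < 1 \<Longrightarrow> c ^ Suc n < c ^ n"
proof -
  assume c: "0 < c" "c < 1"
  have "c ^ n * c \<le> c ^ n * 1" using c by (intro ta_mult_left_mono) simp
  moreover have "c ^ n * c \<noteq> c ^ n * 1"
  proof
    assume "c ^ n * c = c ^ n * 1"
    hence "c * c ^ n \<le> 1 * c ^ n" by (simp add: mult.commute)
    moreover have "1 * c ^ n \<le> c * c ^ n" using \<open>c ^ n * c = c ^ n * 1\<close> by (simp add: mult.commute)
    ultimately have "c = 1"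
      using ta_cancel[of "c ^ n" c 1] ta_cancel[of "c ^ n" 1 c] ta_power_nz[of c n] c by auto
    thus False using c by simp
  qed
  ultimately show ?thesis by (simp add: mult.commute)
qed

lemma ta_power_anti_iff: "0 < c \<Longrightarrow> c < 1 \<Longrightarrow> c ^ u \<le> c ^ v \<longleftrightarrow> v \<le> u"
proof -
  assume c: "0 < c" "c < 1"
  have sm: "c ^ j < c ^ i" if "i < j" for i j
    using that
  proof (induction j)
    case (Suc j)
    have "c ^ Suc j < c ^ j" by (rule ta_power_strict_anti[OF c])
    thus ?case using Suc by (cases "i = j") auto
  qed simp
  show ?thesis
  proof
    assume "c ^ u \<le> c ^ v" thus "v \<le> u" using sm[of u v] by (cases "u < v") auto
  next
    assume "v \<le> u" thus "c ^ u \<le> c ^ v" using sm[of v u] by (cases "v = u") auto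
  qed
qed

end

lemma ta_div_le:
  fixes x :: "'r::tot_aura"
  assumes "x * i \<le> 1" "M * i = 1" shows "x \<le> M"
proof -
  have "x * i * M \<le> 1 * M" by (rule aura_mult_mono[OF assms(1)])
  moreover have "x * i * M = x * (M * i)" by (simp add: ac_simps)
  ultimately show ?thesis using assms(2) by simp
qed

section \<open>Multiplicative seminorms on Z\<close>

lemma ms_0: "mult_seminorm f \<Longrightarrow> f 0 = 0"
  by (simp add: mult_seminorm_def gen_seminorm_def)
lemma ms_1: "mult_seminorm f \<Longrightarrow> f 1 = 1"
  by (simp add: mult_seminorm_def gen_seminorm_def)
lemma ms_add: "mult_seminorm f \<Longrightarrow> f (a + b) \<le> f a + f b"
  by (simp add: mult_seminorm_def gen_seminorm_def)
lemma ms_mult: "mult_seminorm f \<Longrightarrow> f (a * b) = f a * f b"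
  by (simp add: mult_seminorm_def)

lemma ms_m1:
  fixes f :: "int \<Rightarrow> 'r::tot_aura"
  assumes f: "mult_seminorm f"
  shows "f (-1) = 1"
proof -
  let ?x = "f (-1)"
  have sq: "?x * ?x = 1" using ms_mult[OF f, of "-1" "-1"] ms_1[OF f] by simp
  show ?thesis
  proof (rule linorder_cases[of ?x 1])
    assume "?x < 1"
    hence "?x * ?x \<le> ?x * 1" by (intro ta_mult_left_mono) simp
    thus ?thesis using sq \<open>?x < 1\<close> by simp
  next
    assume "?x > 1"
    hence "?x * 1 \<le> ?x * ?x" by (intro ta_mult_left_mono) simp
    thus ?thesis using sq \<open>?x > 1\<close> by simp
  qed
qed

lemma ms_neg:
  fixes f :: "int \<Rightarrow> 'r::tot_aura"
  assumes f: "mult_seminorm f"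
  shows "f (- a) = f a"
  using ms_mult[OF f, of "-1" a] ms_m1[OF f] by simp

lemma ms_abs:
  fixes f :: "int \<Rightarrow> 'r::tot_aura"
  assumes f: "mult_seminorm f"
  shows "f \<bar>a\<bar> = f a"
  by (cases "a \<ge> 0") (auto simp: ms_neg[OF f])

lemma ms_pow:
  fixes f :: "int \<Rightarrow> 'r::tot_aura"
  assumes f: "mult_seminorm f"
  shows "f (a ^ k) = f a ^ k"
  by (induction k) (auto simp: ms_1[OF f] ms_mult[OF f])

lemma ms_of_nat:
  fixes f :: "int \<Rightarrow> 'r::tot_aura"
  assumes f: "mult_seminorm f"
  shows "f (int n) \<le> of_nat n"
proof (induction n)
  case 0 thus ?case by (simp add: ms_0[OF f])
next
  case (Suc n)
  have "f (int (Suc n)) = f (int n + 1)" by (simp add: add.commute)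
  also have "\<dots> \<le> f (int n) + f 1" by (rule ms_add[OF f])
  also have "\<dots> \<le> of_nat n + 1" using Suc by (simp add: ms_1[OF f] add_right_mono)
  finally show ?case by (simp add: add.commute)
qed

lemma ms_sum:
  fixes f :: "int \<Rightarrow> 'r::tot_aura"
  assumes f: "mult_seminorm f"
  shows "f (sum g A) \<le> sum (\<lambda>i. f (g i)) A"
proof (induction A rule: infinite_finite_induct)
  case (infinite A) thus ?case by (simp add: ms_0[OF f])
next
  case empty thus ?case by (simp add: ms_0[OF f])
next
  case (insert x F)
  have "f (sum g (insert x F)) = f (g x + sum g F)" using insert by simp
  also have "\<dots> \<le> f (g x) + f (sum g F)" by (rule ms_add[OF f])
  also have "\<dots> \<le> f (g x) + sum (\<lambda>i. f (g i)) F" using insert by (simp add: add_left_mono)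
  finally show ?case using insert by simp
qed

lemma tg_apply:
  fixes x :: "'r::tot_aura"
  assumes "tempered_growth TYPE('r)" "P \<noteq> 0" "\<And>k. x ^ k \<le> of_nat (poly P k)"
  shows "x \<le> 1"
  using assms unfolding tempered_growth_def by blast

lemma ms_digits:
  fixes f :: "int \<Rightarrow> 'r::tot_aura"
  assumes f: "mult_seminorm f" and n: "n \<ge> 2" and M: "f (int n) \<le> M" "1 \<le> M"
  shows "m < n ^ Suc L \<Longrightarrow> f (int m) \<le> of_nat (Suc L) * of_nat n * M ^ L"
proof (induction L arbitrary: m)
  case 0
  hence "f (int m) \<le> of_nat m" by (simp add: ms_of_nat[OF f])
  also have "\<dots> \<le> of_nat n" using 0 by (simp add: ta_of_nat_mono)
  finally show ?case by simp
next
  case (Suc L)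
  define q where "q = m div n"
  define r where "r = m mod n"
  have q: "q < n ^ Suc L" using Suc.prems n unfolding q_def
    by (simp add: div_less_iff_less_mult mult.commute)
  have r: "r < n" using n unfolding r_def by simp
  have mqr: "int m = int q * int n + int r" unfolding q_def r_def
    by (metis div_mult_mod_eq of_nat_add of_nat_mult)
  have "f (int m) \<le> f (int q * int n) + f (int r)" unfolding mqr by (rule ms_add[OF f])
  also have "\<dots> = f (int q) * f (int n) + f (int r)" by (simp add: ms_mult[OF f])
  also have "\<dots> \<le> (of_nat (Suc L) * of_nat n * M ^ L) * M + of_nat n"
  proof (rule add_mono)
    show "f (int q) * f (int n) \<le> (of_nat (Suc L) * of_nat n * M ^ L) * M"
      using Suc.IH[OF q] M by (intro ta_mult_mono2)
    show "f (int r) \<le> of_nat n"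
      using r by (intro order_trans[OF ms_of_nat[OF f, of r] ta_of_nat_mono]) simp
  qed
  also have "\<dots> \<le> of_nat (Suc L) * of_nat n * M ^ Suc L + of_nat n * M ^ Suc L"
    using ta_one_le_power[OF M(2), of "Suc L"] ta_nonneg[of "of_nat n"] mult_left_mono[of 1 "M ^ Suc L" "of_nat n"]
    by (intro add_mono) (simp_all add: mult.assoc mult.commute mult.left_commute)
  also have "\<dots> = of_nat (Suc (Suc L)) * of_nat n * M ^ Suc L"
    by (simp add: algebra_simps)
  finally show ?case .
qed

lemma ms_small_all:
  fixes f :: "int \<Rightarrow> 'r::tot_aura"
  assumes tg: "tempered_growth TYPE('r)" and f: "mult_seminorm f" and n: "n \<ge> 2"
    and fn: "f (int n) \<le> 1"
  shows "f (int m) \<le> 1"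
proof (rule tg_apply[OF tg, of "[:n, m * n:]"])
  show "[:n, m * n:] \<noteq> 0" using n by simp
  fix k
  have "m < 2 ^ m" by (rule less_exp)
  also have "\<dots> \<le> n ^ m" using n by (simp add: power_mono)
  finally have "m ^ k \<le> (n ^ m) ^ k" by (simp add: power_mono)
  also have "\<dots> < n ^ Suc (m * k)" using n by (simp add: power_mult[symmetric])
  finally have lt: "m ^ k < n ^ Suc (m * k)" .
  have "f (int m) ^ k = f (int (m ^ k))" by (simp add: ms_pow[OF f])
  also have "\<dots> \<le> of_nat (Suc (m * k)) * of_nat n * 1 ^ (m * k)"
    by (rule ms_digits[OF f n fn order.refl lt])
  also have "\<dots> = of_nat (poly [:n, m * n:] k)" by (simp add: algebra_simps)
  finally show "f (int m) ^ k \<le> of_nat (poly [:n, m * n:] k)" .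
qed

lemma ms_mono:
  fixes f :: "int \<Rightarrow> 'r::tot_aura"
  assumes tg: "tempered_growth TYPE('r)" and f: "mult_seminorm f" and n: "n \<ge> 2"
    and mn: "m \<le> n"
  shows "f (int m) \<le> max 1 (f (int n))"
proof -
  define M where "M = max 1 (f (int n))"
  have M1: "1 \<le> M" and fnM: "f (int n) \<le> M" unfolding M_def by auto
  have "M \<noteq> 0" using M1 aura_positive by (metis leD)
  then obtain i where i: "M * i = 1" using aura_semifield by blast
  have "f (int m) * i \<le> 1"
  proof (rule tg_apply[OF tg, of "[:n, n:]"])
    show "[:n, n:] \<noteq> 0" using n by simp
    fix k
    have "m ^ k \<le> n ^ k" using mn by (simp add: power_mono)
    also have "\<dots> < n ^ Suc k" using n by simp
    finally have lt: "m ^ k < n ^ Suc k" .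
    have "f (int m) ^ k = f (int (m ^ k))" by (simp add: ms_pow[OF f])
    also have "\<dots> \<le> of_nat (Suc k) * of_nat n * M ^ k"
      by (rule ms_digits[OF f n fnM M1 lt])
    finally have "f (int m) ^ k * i ^ k \<le> of_nat (Suc k) * of_nat n * M ^ k * i ^ k"
      by (rule aura_mult_mono)
    also have "\<dots> = of_nat (Suc k) * of_nat n * (M * i) ^ k" by (simp add: power_mult_distrib mult.assoc)
    also have "\<dots> = of_nat (poly [:n, n:] k)" using i by (simp add: algebra_simps)
    finally show "(f (int m) * i) ^ k \<le> of_nat (poly [:n, n:] k)" by (simp add: power_mult_distrib)
  qed
  hence "f (int m) \<le> M" using i by (rule ta_div_le)
  thus ?thesis unfolding M_def .
qed

lemma ms_ultra:
  fixes f :: "int \<Rightarrow> 'r::tot_aura"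
  assumes tg: "tempered_growth TYPE('r)" and f: "mult_seminorm f" and le1: "\<And>x. f x \<le> 1"
  shows "f (a + b) \<le> max (f a) (f b)"
proof -
  define M where "M = max (f a) (f b)"
  show ?thesis
  proof (cases "M = 0")
    case True
    hence "f a = 0" "f b = 0" unfolding M_def using ta_nonneg[of "f a"] ta_nonneg[of "f b"]
      by (auto simp: max_def split: if_splits)
    thus ?thesis using ms_add[OF f, of a b] by simp
  next
    case False
    then obtain i where i: "M * i = 1" using aura_semifield by blast
    have "f (a + b) * i \<le> 1"
    proof (rule tg_apply[OF tg, of "[:1, 1:]"])
      show "[:1, 1:] \<noteq> (0::nat poly)" by simp
      fix k
      have "f (a + b) ^ k = f ((a + b) ^ k)" by (simp add: ms_pow[OF f])
      also have "\<dots> = f (\<Sum>j\<le>k. of_nat (k choose j) * a ^ j * b ^ (k - j))"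
        by (simp add: binomial_ring)
      also have "\<dots> \<le> (\<Sum>j\<le>k. f (of_nat (k choose j) * a ^ j * b ^ (k - j)))"
        by (rule ms_sum[OF f])
      also have "\<dots> \<le> (\<Sum>j\<le>k. M ^ k)"
      proof (rule sum_mono)
        fix j assume j: "j \<in> {..k}"
        have "f (of_nat (k choose j) * a ^ j * b ^ (k - j))
              = f (of_nat (k choose j)) * (f a ^ j * f b ^ (k - j))"
          by (simp add: ms_mult[OF f] ms_pow[OF f] mult.assoc)
        also have "\<dots> \<le> 1 * (M ^ j * M ^ (k - j))"
          by (intro ta_mult_mono2 le1 ta_power_mono) (auto simp: M_def)
        also have "\<dots> = M ^ k" using j by (simp add: power_add[symmetric])
        finally show "f (of_nat (k choose j) * a ^ j * b ^ (k - j)) \<le> M ^ k" .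
      qed
      also have "\<dots> = of_nat (Suc k) * M ^ k" by simp
      finally have "f (a + b) ^ k * i ^ k \<le> of_nat (Suc k) * M ^ k * i ^ k"
        by (rule aura_mult_mono)
      also have "\<dots> = of_nat (Suc k) * (M * i) ^ k" by (simp add: power_mult_distrib ac_simps)
      also have "\<dots> = of_nat (poly [:1, 1:] k)" using i by simp
      finally show "(f (a + b) * i) ^ k \<le> of_nat (poly [:1, 1:] k)" by (simp add: power_mult_distrib)
    qed
    hence "f (a + b) \<le> M" using i by (rule ta_div_le)
    thus ?thesis unfolding M_def .
  qed
qed

lemma nn_le_iff: "(x::nnreal) \<le> y \<longleftrightarrow> nn_val x \<le> nn_val y"
  by (rule less_eq_nnreal.rep_eq)

lemma nn_val_of: "0 \<le> r \<Longrightarrow> nn_val (nn_of r) = r"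
  by (simp add: nn_of_inverse)

lemma nn_val_0: "nn_val 0 = 0" by (rule zero_nnreal.rep_eq)
lemma nn_val_1: "nn_val 1 = 1" by (rule one_nnreal.rep_eq)
lemma nn_val_add: "nn_val (x + y) = nn_val x + nn_val y" by (rule plus_nnreal.rep_eq)
lemma nn_val_mult: "nn_val (x * y) = nn_val x * nn_val y" by (rule times_nnreal.rep_eq)
lemma nn_val_ge0: "0 \<le> nn_val x" using nn_val[of x] by simp
lemma nn_eq_iff: "(x::nnreal) = y \<longleftrightarrow> nn_val x = nn_val y" by (simp add: nn_val_inject)

lemma nn_val_pow: "nn_val (x ^ n) = nn_val x ^ n"
  by (induction n) (simp_all add: nn_val_1 nn_val_mult)

lemma nn_val_of_nat: "nn_val (of_nat n) = real n"
  by (induction n) (simp_all add: nn_val_0 nn_val_1 nn_val_add)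

section \<open>Archimedean case\<close>

lemma pow_gap_aux: "(m::nat) ^ b * (m + b) \<le> m * (m + 1) ^ b"
proof (induction b)
  case 0 thus ?case by simp
next
  case (Suc b)
  have "m ^ Suc b * (m + Suc b) = m * (m ^ b * (m + b)) + m ^ Suc b" by (simp add: algebra_simps)
  also have "\<dots> \<le> m * (m ^ b * (m + b)) + m ^ b * (m + b)"
    by (simp add: mult_left_mono)
  also have "\<dots> = (m + 1) * (m ^ b * (m + b))" by (simp add: algebra_simps)
  also have "\<dots> \<le> (m + 1) * (m * (m + 1) ^ b)" by (rule mult_left_mono[OF Suc.IH]) simp
  also have "\<dots> = m * (m + 1) ^ Suc b" by (simp add: algebra_simps)
  finally show ?case .
qed

lemma pow_gap: assumes "1 \<le> (m::nat)" "m < n" shows "\<exists>b. m ^ Suc b \<le> n ^ b"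
proof (intro exI)
  let ?b = "m * m"
  have "m * (m ^ ?b * (1 + m)) = m ^ ?b * (m + ?b)" by (simp add: algebra_simps)
  also have "\<dots> \<le> m * (m + 1) ^ ?b" by (rule pow_gap_aux)
  finally have "m ^ ?b * (1 + m) \<le> (m + 1) ^ ?b" using assms(1) by simp
  moreover have "m ^ Suc ?b \<le> m ^ ?b * (1 + m)" by simp
  moreover have "(m + 1) ^ ?b \<le> n ^ ?b" using assms by (simp add: power_mono)
  ultimately show "m ^ Suc ?b \<le> n ^ ?b" by linarith
qed

lemma ms_arch:
  fixes f :: "int \<Rightarrow> 'r::tot_aura"
  assumes tg: "tempered_growth TYPE('r)" and f: "mult_seminorm f"
    and n0: "n0 \<ge> 2" "f (int n0) > 1"
  shows "f x \<le> f y \<longleftrightarrow> \<bar>x\<bar> \<le> \<bar>y\<bar>"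
proof -
  have gt1: "f (int m) > 1" if "m \<ge> 2" for m
  proof (rule ccontr)
    assume "\<not> f (int m) > 1"
    hence "f (int m) \<le> 1" by simp
    from ms_small_all[OF tg f that this, of n0] n0 show False by simp
  qed
  have mono: "f (int m) \<le> f (int n)" if "m \<le> n" for m n
  proof (cases "n \<ge> 2")
    case True
    with ms_mono[OF tg f True that] max_absorb2[OF less_imp_le[OF gt1[OF True]]] show ?thesis by simp
  next
    case False
    hence "m = n \<or> (m = 0 \<and> n = 1)" using that by auto
    thus ?thesis using ms_0[OF f] ms_1[OF f] ta_nonneg[of "1::'r"] by auto
  qed
  have strict: "f (int m) < f (int n)" if "m < n" for m n
  proof (cases "m \<ge> 2")
    case False
    have "m = 0 \<or> m = 1" using False by auto
    hence fm: "f (int m) \<le> 1" using ms_0[OF f] ms_1[OF f] ta_nonneg[of "1::'r"] by auto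
    show ?thesis
    proof (cases "n \<ge> 2")
      case True thus ?thesis using fm gt1[OF True] by simp
    next
      case False
      hence "m = 0" "n = 1" using that \<open>\<not> m \<ge> 2\<close> by auto
      thus ?thesis using ms_0[OF f] ms_1[OF f] aura_positive by simp
    qed
  next
    case True
    show ?thesis
    proof (rule ccontr)
      assume "\<not> f (int m) < f (int n)"
      hence eq: "f (int m) = f (int n)" using mono[of m n] that by simp
      define c where "c = f (int m)"
      have c1: "c > 1" unfolding c_def using gt1[OF True] .
      obtain b where b: "m ^ Suc b \<le> n ^ b" using pow_gap[of m n] True \<open>m < n\<close> by auto
      have "c ^ Suc b = f (int (m ^ Suc b))" unfolding c_def by (simp only: of_nat_power ms_pow[OF f])
      also have "\<dots> \<le> f (int (n ^ b))" by (rule mono[OF b])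
      also have "\<dots> = c ^ b" unfolding c_def eq by (simp only: of_nat_power ms_pow[OF f])
      finally have "c * c ^ b \<le> 1 * c ^ b" by simp
      moreover have "c ^ b \<noteq> 0" using c1 aura_positive[where 'a='r] by (intro ta_power_nz) (metis less_asym)
      ultimately have "c \<le> 1" using ta_cancel by blast
      thus False using c1 by simp
    qed
  qed
  have key: "f (int a) \<le> f (int b) \<longleftrightarrow> a \<le> b" for a b
    using mono[of a b] strict[of b a] by (cases "a \<le> b") auto
  have "f x = f (int (nat \<bar>x\<bar>))" by (simp add: ms_abs[OF f])
  moreover have "f y = f (int (nat \<bar>y\<bar>))" by (simp add: ms_abs[OF f])
  ultimately show ?thesis using key[of "nat \<bar>x\<bar>" "nat \<bar>y\<bar>"] by (simp add: nat_le_eq_zle)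
qed

lemma arch_le: "arch_abs x \<le> arch_abs y \<longleftrightarrow> \<bar>x\<bar> \<le> \<bar>y\<bar>"
  unfolding arch_abs_def nn_le_iff
  by (simp add: nn_val_of abs_if max_def)

section \<open>Non-archimedean case\<close>

lemma trivial_le: "trivial_abs x \<le> trivial_abs y \<longleftrightarrow> (x = 0 \<or> y \<noteq> 0)"
  using aura_positive[where 'a=nnreal] ta_nonneg[of "1::nnreal"]
  by (auto simp: trivial_abs_def)

lemma ms_trivial:
  fixes f :: "int \<Rightarrow> 'r::tot_aura"
  assumes f: "mult_seminorm f" and one: "\<And>x. x \<noteq> 0 \<Longrightarrow> f x = 1"
  shows "f x \<le> f y \<longleftrightarrow> trivial_abs x \<le> trivial_abs y"
  unfolding trivial_le
  using one[of x] one[of y] ms_0[OF f] aura_positive[where 'a='r] ta_nonneg[of "1::'r"]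
  by (cases "x = 0"; cases "y = 0") auto

lemma ms_prime:
  fixes f :: "int \<Rightarrow> 'r::tot_aura"
  assumes tg: "tempered_growth TYPE('r)" and f: "mult_seminorm f" and le1: "\<And>x. f x \<le> 1"
    and x0: "x0 \<noteq> 0" "f x0 < 1"
  shows "\<exists>p. prime p \<and> (\<forall>x. f x < 1 \<longleftrightarrow> int p dvd x)"
proof -
  define P where "P = (\<lambda>k::nat. 0 < k \<and> f (int k) < 1)"
  have "P (nat \<bar>x0\<bar>)" unfolding P_def using x0 by (simp add: ms_abs[OF f])
  define p where "p = (LEAST k. P k)"
  have Pp: "P p" unfolding p_def by (rule LeastI) fact
  have minp: "\<not> P k" if "k < p" for k using not_less_Least[of k P] that unfolding p_def by simp
  have one: "f (int k) = 1" if "0 < k" "k < p" for k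
    using minp[OF that(2)] that(1) le1[of "int k"] unfolding P_def by (simp add: not_less)
  have p1: "p \<noteq> 1" using Pp ms_1[OF f] unfolding P_def by auto
  have p0: "0 < p" using Pp unfolding P_def by simp
  have pprime: "prime p"
    unfolding prime_nat_iff
  proof (intro conjI allI impI)
    show "1 < p" using p0 p1 by simp
    fix m assume "m dvd p"
    then obtain k where k: "p = m * k" by auto
    show "m = 1 \<or> m = p"
    proof (rule ccontr)
      assume "\<not> (m = 1 \<or> m = p)"
      hence m: "m \<noteq> 1" "m \<noteq> p" by auto
      have "m \<noteq> 0" "k \<noteq> 0" using k p0 by auto
      hence "k \<noteq> 1" using k m by auto
      have k2: "1 < k" using \<open>k \<noteq> 0\<close> \<open>k \<noteq> 1\<close> by linarith
      have m2: "1 < m" using \<open>m \<noteq> 0\<close> m(1) by linarith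
      have "m * 1 < m * k" using k2 \<open>m \<noteq> 0\<close> by (intro mult_strict_left_mono) auto
      hence "0 < m" "m < p" using k \<open>m \<noteq> 0\<close> by auto
      have km: "1 * k < m * k" using m2 \<open>k \<noteq> 0\<close> by (intro mult_strict_right_mono) auto
      have "0 < k" "k < p" using k \<open>k \<noteq> 0\<close> km by auto
      have "f (int p) = f (int m) * f (int k)" using k by (simp add: ms_mult[OF f])
      also have "\<dots> = 1" using one \<open>0 < m\<close> \<open>m < p\<close> \<open>0 < k\<close> \<open>k < p\<close> by simp
      finally have "f (int p) = 1" .
      thus False using Pp unfolding P_def by simp
    qed
  qed
  have fp: "f (int p) < 1" using Pp unfolding P_def by simp
  have dvd_small: "f x < 1" if dx: "int p dvd x" for x
  proof -
    obtain y where "x = int p * y" using dx by auto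
    hence "f x = f (int p) * f y" by (simp add: ms_mult[OF f])
    also have "\<dots> \<le> f (int p) * 1" by (intro ta_mult_left_mono le1)
    finally show ?thesis using fp by simp
  qed
  have small_dvd: "int p dvd x" if "f x < 1" for x
  proof (rule ccontr)
    assume nd: "\<not> int p dvd x"
    define r where "r = x mod int p"
    define q where "q = x div int p"
    have "r \<noteq> 0" using nd unfolding r_def by (simp add: dvd_eq_mod_eq_0)
    moreover have "0 \<le> r" "r < int p" using p0 unfolding r_def by simp_all
    ultimately have r: "0 < r" "r < int p" by simp_all
    have "r = x + (- (int p * q))" unfolding r_def q_def by (simp add: minus_div_mult_eq_mod[symmetric])
    hence "f r \<le> max (f x) (f (- (int p * q)))" using ms_ultra[OF tg f le1, of x "- (int p * q)"] by (simp only:)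
    moreover have "f (- (int p * q)) < 1" by (simp add: ms_neg[OF f] dvd_small)
    ultimately have "f r < 1" using that by (metis max_less_iff_conj le_less_trans)
    moreover have "f r = 1" using one[of "nat r"] r by simp
    ultimately show False by simp
  qed
  show ?thesis using pprime dvd_small small_dvd by blast
qed

lemma residual_le: "residual_abs p x \<le> residual_abs p y \<longleftrightarrow> (int p dvd x \<or> \<not> int p dvd y)"
  by (auto simp: residual_abs_def less_eq_bsf_def)

lemma ms_residual:
  fixes f :: "int \<Rightarrow> 'r::tot_aura"
  assumes f: "mult_seminorm f" and le1: "\<And>x. f x \<le> 1"
    and I: "\<And>x. f x < 1 \<longleftrightarrow> int p dvd x" and c0: "f (int p) = 0"
  shows "f x \<le> f y \<longleftrightarrow> residual_abs p x \<le> residual_abs p y"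
proof -
  have val: "f z = (if int p dvd z then 0 else 1)" for z
  proof (cases "int p dvd z")
    case True
    then obtain w where "z = int p * w" by auto
    thus ?thesis using True c0 by (simp add: ms_mult[OF f])
  next
    case False
    thus ?thesis using I[of z] le1[of z] by simp
  qed
  show ?thesis unfolding residual_le val
    using aura_positive[where 'a='r] ta_nonneg[of "1::'r"] by auto
qed

lemma padic_val: "nn_val (padic_abs p x) = (if x = 0 then 0 else inverse (real p ^ multiplicity (int p) x))"
  unfolding padic_abs_def by (simp add: nn_val_of)

lemma padic_le:
  assumes p: "prime p"
  shows "padic_abs p x \<le> padic_abs p y \<longleftrightarrow>
    (x = 0 \<or> (y \<noteq> 0 \<and> multiplicity (int p) y \<le> multiplicity (int p) x))"
proof -
  have p1: "real p > 1" using prime_gt_1_nat[OF p] by simp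
  have pos: "0 < inverse (real p ^ k)" for k using p1 by simp
  have iff: "inverse (real p ^ u) \<le> inverse (real p ^ v) \<longleftrightarrow> v \<le> u" for u v
    using p1 by (simp add: inverse_le_iff_le power_increasing_iff)
  show ?thesis unfolding nn_le_iff padic_val
    using pos[of "multiplicity (int p) x"] iff by (auto simp: not_le[symmetric])
qed

lemma ms_padic:
  fixes f :: "int \<Rightarrow> 'r::tot_aura"
  assumes f: "mult_seminorm f" and le1: "\<And>x. f x \<le> 1" and p: "prime p"
    and I: "\<And>x. f x < 1 \<longleftrightarrow> int p dvd x" and c0: "f (int p) \<noteq> 0"
  shows "f x \<le> f y \<longleftrightarrow> padic_abs p x \<le> padic_abs p y"
proof -
  define c where "c = f (int p)"
  have c: "0 < c" "c < 1" unfolding c_def using c0 ta_nonneg[of "f (int p)"] I[of "int p"]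
    by (auto simp: less_le)
  have nu: "\<not> is_unit (int p)" using prime_gt_1_nat[OF p] by simp
  have val: "f z = c ^ multiplicity (int p) z" if zn: "z \<noteq> 0" for z
  proof -
    obtain w where w: "z = int p ^ multiplicity (int p) z * w" "\<not> int p dvd w"
      using multiplicity_decompose'[OF zn nu] by blast
    have "f w = 1" using I[of w] le1[of w] w(2) by simp
    have "f z = f (int p ^ multiplicity (int p) z) * f w" by (subst w(1)) (simp add: ms_mult[OF f])
    also have "\<dots> = c ^ multiplicity (int p) z" using \<open>f w = 1\<close> by (simp add: ms_pow[OF f] c_def)
    finally show ?thesis .
  qed
  have nz: "c ^ k \<noteq> 0" for k using c by (intro ta_power_nz) simp
  show ?thesis
  proof (cases "x = 0")
    case True thus ?thesis using ms_0[OF f] ta_nonneg by (simp add: padic_le[OF p])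
  next
    case False
    show ?thesis
    proof (cases "y = 0")
      case True
      have "\<not> f x \<le> 0" using val[OF False] nz[of "multiplicity (int p) x"] ta_nonneg[of "f x"] by simp
      thus ?thesis using True False ms_0[OF f] by (simp add: padic_le[OF p])
    next
      case False
      thus ?thesis using \<open>x \<noteq> 0\<close> val[OF \<open>x \<noteq> 0\<close>] val[OF False] ta_power_anti_iff[OF c] by (simp add: padic_le[OF p])
    qed
  qed
qed

section \<open>Classification\<close>

lemma ord_to_me:
  fixes f :: "'a::times \<Rightarrow> 'r::{times,ord}" and g :: "'a \<Rightarrow> 's::{times,ord}"
  assumes "\<And>a b. f (a * b) = f a * f b" "\<And>a b. g (a * b) = g a * g b"
    "\<And>x y. f x \<le> f y \<longleftrightarrow> g x \<le> g y"
  shows "mult_equiv f g"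
  unfolding mult_equiv_def by (simp add: assms(1,2)[symmetric] assms(3))

lemma classify:
  fixes f :: "int \<Rightarrow> 'r::tot_aura"
  assumes tg: "tempered_growth TYPE('r)" and f: "mult_seminorm f"
  shows "(\<exists>p. prime p \<and> ((\<forall>x y. f x \<le> f y \<longleftrightarrow> padic_abs p x \<le> padic_abs p y)
                         \<or> (\<forall>x y. f x \<le> f y \<longleftrightarrow> residual_abs p x \<le> residual_abs p y)))
       \<or> (\<forall>x y. f x \<le> f y \<longleftrightarrow> trivial_abs x \<le> trivial_abs y)
       \<or> (\<forall>x y. f x \<le> f y \<longleftrightarrow> arch_abs x \<le> arch_abs y)"
proof (cases "\<exists>n. n \<ge> 2 \<and> f (int n) > 1")
  case True
  then obtain n where "n \<ge> 2" "f (int n) > 1" by blast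
  thus ?thesis using ms_arch[OF tg f] arch_le by blast
next
  case False
  have le1: "f x \<le> 1" for x
  proof -
    have "f x = f (int (nat \<bar>x\<bar>))" by (simp add: ms_abs[OF f])
    moreover have "f (int m) \<le> 1" for m
    proof (cases "m \<ge> 2")
      case True thus ?thesis using False by (simp add: not_less)
    next
      case False
      hence "m = 0 \<or> m = 1" by auto
      thus ?thesis using ms_0[OF f] ms_1[OF f] ta_nonneg[of "1::'r"] by auto
    qed
    ultimately show ?thesis by metis
  qed
  show ?thesis
  proof (cases "\<exists>x. x \<noteq> 0 \<and> f x < 1")
    case True
    then obtain x0 where "x0 \<noteq> 0" "f x0 < 1" by blast
    from ms_prime[OF tg f le1 this] obtain p where p: "prime p" "\<And>x. f x < 1 \<longleftrightarrow> int p dvd x"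
      by blast
    show ?thesis
    proof (cases "f (int p) = 0")
      case True
      thus ?thesis using ms_residual[OF f le1 p(2) True] p(1) by blast
    next
      case False
      thus ?thesis using ms_padic[OF f le1 p(1) p(2) False] p(1) by blast
    qed
  next
    case False
    have "f x = 1" if "x \<noteq> 0" for x using False le1[of x] that by (auto simp: not_less intro: order.antisym)
    thus ?thesis using ms_trivial[OF f] by blast
  qed
qed

section \<open>The four seminorms\<close>

lemma ms_trivial_abs: "mult_seminorm trivial_abs"
  unfolding mult_seminorm_def gen_seminorm_def trivial_abs_def
  using ta_le_add[of "1::nnreal"] ta_le_add[of "1::nnreal", of 1]
    ta_nonneg[of "1::nnreal"]
  by (auto simp: add.commute)

lemma ms_arch_abs: "mult_seminorm arch_abs"
proof -
  have av: "nn_val (arch_abs x) = real_of_int \<bar>x\<bar>" for x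
    unfolding arch_abs_def by (simp add: nn_val_of abs_if max_def)
  show ?thesis
    unfolding mult_seminorm_def gen_seminorm_def nn_le_iff nn_eq_iff
    by (simp add: av nn_val_0 nn_val_1 nn_val_add nn_val_mult abs_mult abs_triangle_ineq
        flip: of_int_abs of_int_add)
qed

lemma ms_padic_abs:
  assumes p: "prime p"
  shows "mult_seminorm (padic_abs p)"
proof -
  have pe: "prime_elem (int p)" using p by simp
  have nu: "\<not> is_unit (int p)" using prime_gt_1_nat[OF p] by simp
  have p1: "real p > 1" using prime_gt_1_nat[OF p] by simp
  let ?v = "multiplicity (int p)"
  have add: "padic_abs p (a + b) \<le> padic_abs p a + padic_abs p b" for a b
  proof (cases "a = 0 \<or> b = 0 \<or> a + b = 0")
    case True
    thus ?thesis unfolding nn_le_iff nn_val_add padic_val by auto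
  next
    case False
    define k where "k = min (?v a) (?v b)"
    have "int p ^ k dvd a" "int p ^ k dvd b" unfolding k_def by (auto intro: multiplicity_dvd')
    hence "int p ^ k dvd a + b" by simp
    hence "k \<le> ?v (a + b)" using False nu by (intro multiplicity_geI) auto
    hence "inverse (real p ^ ?v (a + b)) \<le> inverse (real p ^ k)"
      using p1 by (simp add: inverse_le_iff_le power_increasing_iff)
    also have "\<dots> \<le> inverse (real p ^ ?v a) + inverse (real p ^ ?v b)"
      unfolding k_def using p1 by (cases "?v a \<le> ?v b") (auto simp: min_def add_increasing2 add_increasing)
    finally show ?thesis unfolding nn_le_iff nn_val_add padic_val using False by simp
  qed
  have mult: "padic_abs p (a * b) = padic_abs p a * padic_abs p b" for a b
    unfolding nn_eq_iff nn_val_mult padic_val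
    by (simp add: prime_elem_multiplicity_mult_distrib[OF pe] power_add)
  have "padic_abs p 0 = 0" "padic_abs p 1 = 1"
    by (simp_all add: nn_eq_iff padic_val nn_val_0 nn_val_1)
  thus ?thesis unfolding mult_seminorm_def gen_seminorm_def
    using add mult by simp
qed

lemma ms_residual_abs:
  assumes p: "prime p"
  shows "mult_seminorm (residual_abs p)"
proof -
  have pe: "prime (int p)" using p by simp
  have add: "residual_abs p (a + b) \<le> residual_abs p a + residual_abs p b" for a b
    by (cases "int p dvd a"; cases "int p dvd b")
       (auto simp: residual_abs_def less_eq_bsf_def dvd_add)
  have mult: "residual_abs p (a * b) = residual_abs p a * residual_abs p b" for a b
    using prime_dvd_mult_iff[OF pe, of a b]
    by (cases "int p dvd a"; cases "int p dvd b") (auto simp: residual_abs_def)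
  have "\<not> int p dvd 1" using prime_gt_1_nat[OF p] by (simp add: zdvd1_eq)
  thus ?thesis unfolding mult_seminorm_def gen_seminorm_def
    using add mult by (simp add: residual_abs_def zero_bsf_def one_bsf_def)
qed

section \<open>Tempered growth of the two auras\<close>

lemma tg_bsf: "tempered_growth TYPE(bsf)"
  unfolding tempered_growth_def
proof (intro allI impI)
  fix P :: "nat poly" and x :: bsf
  show "x \<le> 1" by (cases x) (auto simp: less_eq_bsf_def one_bsf_def)
qed

lemma poly_nat_bound:
  fixes P :: "nat poly"
  assumes "1 \<le> n"
  shows "poly P n \<le> (\<Sum>i\<le>degree P. coeff P i) * n ^ degree P"
proof -
  have "poly P n = (\<Sum>i\<le>degree P. coeff P i * n ^ i)" by (rule poly_altdef)
  also have "\<dots> \<le> (\<Sum>i\<le>degree P. coeff P i * n ^ degree P)"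
    using assms by (intro sum_mono mult_left_mono power_increasing) auto
  also have "\<dots> = (\<Sum>i\<le>degree P. coeff P i) * n ^ degree P" by (simp add: sum_distrib_right)
  finally show ?thesis .
qed

lemma tg_nnreal: "tempered_growth TYPE(nnreal)"
  unfolding tempered_growth_def
proof (intro allI impI)
  fix P :: "nat poly" and x :: nnreal
  assume "P \<noteq> 0" and H: "\<forall>n. x ^ n \<le> of_nat (poly P n)"
  define y where "y = nn_val x"
  define C where "C = real (\<Sum>i\<le>degree P. coeff P i)"
  define d where "d = degree P"
  have Hy: "y ^ n \<le> real (poly P n)" for n
    using H[rule_format, of n] unfolding nn_le_iff y_def by (simp add: nn_val_pow nn_val_of_nat)
  have bound: "y ^ n \<le> C * real n ^ d" if "1 \<le> n" for n
  proof -
    have "real (poly P n) \<le> C * real n ^ d"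
      unfolding C_def d_def using poly_nat_bound[OF that, of P]
      by (metis of_nat_le_iff of_nat_mult of_nat_power)
    thus ?thesis using Hy[of n] by linarith
  qed
  show "x \<le> 1"
  proof (rule ccontr)
    assume "\<not> x \<le> 1"
    hence y1: "y > 1" unfolding nn_le_iff y_def by (simp add: nn_val_1)
    have C0: "0 \<le> C" unfolding C_def by (rule of_nat_0_le_iff)
    have lim: "(\<lambda>n::nat. real n ^ d / y ^ n) \<longlonglongrightarrow> 0" using y1 by real_asymp
    have "inverse (C + 1) > 0" using C0 by simp
    from order_tendstoD(2)[OF lim this]
    obtain N where N: "\<And>n. n \<ge> N \<Longrightarrow> real n ^ d / y ^ n < inverse (C + 1)"
      unfolding eventually_sequentially by blast
    define n where "n = max N 1"
    have n: "real n ^ d / y ^ n < inverse (C + 1)" "1 \<le> n" using N[of n] unfolding n_def by auto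
    define a where "a = real n ^ d"
    have yp: "y ^ n > 0" using y1 by simp
    have "a < inverse (C + 1) * y ^ n" using n(1) yp unfolding a_def by (simp add: divide_less_eq)
    hence "(C + 1) * a < (C + 1) * (inverse (C + 1) * y ^ n)"
      using C0 by (intro mult_strict_left_mono) auto
    also have "\<dots> = y ^ n" using C0 by (simp add: mult.assoc[symmetric])
    finally have A: "(C + 1) * a < y ^ n" .
    have B: "y ^ n \<le> C * a" unfolding a_def by (rule bound[OF n(2)])
    have Z: "0 \<le> a" unfolding a_def by simp
    have "(C + 1) * a = C * a + a" by (simp add: algebra_simps)
    thus False using A B Z by linarith
  qed
qed

section \<open>An R_+-valued representative of the residual places\<close>

definition res_nn :: "nat \<Rightarrow> int \<Rightarrow> nnreal" where
  "res_nn p n = (if int p dvd n then 0 else 1)"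

lemma ms_res_nn:
  assumes p: "prime p"
  shows "mult_seminorm (res_nn p)"
proof -
  have pe: "prime (int p)" using p by simp
  have add: "res_nn p (a + b) \<le> res_nn p a + res_nn p b" for a b
    using ta_nonneg[of "1::nnreal"] ta_le_add[of "1::nnreal"] ta_le_add[of "1::nnreal" 1]
    by (cases "int p dvd a"; cases "int p dvd b")
       (auto simp: res_nn_def dvd_add add.commute)
  have mult: "res_nn p (a * b) = res_nn p a * res_nn p b" for a b
    using prime_dvd_mult_iff[OF pe, of a b]
    by (cases "int p dvd a"; cases "int p dvd b") (auto simp: res_nn_def)
  have "\<not> int p dvd 1" using prime_gt_1_nat[OF p] by (simp add: zdvd1_eq)
  thus ?thesis unfolding mult_seminorm_def gen_seminorm_def
    using add mult by (simp add: res_nn_def)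
qed

lemma res_nn_le: "res_nn p x \<le> res_nn p y \<longleftrightarrow> residual_abs p x \<le> residual_abs p y"
  unfolding residual_le res_nn_def
  using aura_positive[where 'a=nnreal] ta_nonneg[of "1::nnreal"] by auto

lemma me_trans:
  "mult_equiv f h \<Longrightarrow> mult_equiv g h \<Longrightarrow> mult_equiv g f"
  unfolding mult_equiv_def by blast

lemma part1:
  fixes f :: "int \<Rightarrow> 'r::tot_aura"
  assumes tg: "tempered_growth TYPE('r)" and f: "mult_seminorm f"
  shows "(\<exists>p::nat. prime p \<and> (mult_equiv f (padic_abs p) \<or> mult_equiv f (residual_abs p)))
              \<or> mult_equiv f trivial_abs \<or> mult_equiv f arch_abs"
proof -
  note fm = ms_mult[OF f]
  from classify[OF tg f] show ?thesis
  proof (elim disjE exE conjE)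
    fix p assume p: "prime p" and H: "\<forall>x y. f x \<le> f y \<longleftrightarrow> padic_abs p x \<le> padic_abs p y"
    have "mult_equiv f (padic_abs p)"
      using H by (intro ord_to_me fm ms_mult[OF ms_padic_abs[OF p]]) blast
    thus ?thesis using p by blast
  next
    fix p assume p: "prime p" and H: "\<forall>x y. f x \<le> f y \<longleftrightarrow> residual_abs p x \<le> residual_abs p y"
    have "mult_equiv f (residual_abs p)"
      using H by (intro ord_to_me fm ms_mult[OF ms_residual_abs[OF p]]) blast
    thus ?thesis using p by blast
  next
    assume H: "\<forall>x y. f x \<le> f y \<longleftrightarrow> trivial_abs x \<le> trivial_abs y"
    have "mult_equiv f trivial_abs"
      using H by (intro ord_to_me fm ms_mult[OF ms_trivial_abs]) blast
    thus ?thesis by blast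
  next
    assume H: "\<forall>x y. f x \<le> f y \<longleftrightarrow> arch_abs x \<le> arch_abs y"
    have "mult_equiv f arch_abs"
      using H by (intro ord_to_me fm ms_mult[OF ms_arch_abs]) blast
    thus ?thesis by blast
  qed
qed

lemma part3:
  fixes f :: "int \<Rightarrow> 'r::tot_aura"
  assumes tg: "tempered_growth TYPE('r)" and f: "mult_seminorm f"
  shows "\<exists>g :: int \<Rightarrow> nnreal. mult_seminorm g \<and> mult_equiv g f"
proof -
  note fm = ms_mult[OF f]
  from classify[OF tg f] show ?thesis
  proof (elim disjE exE conjE)
    fix p assume p: "prime p" and H: "\<forall>x y. f x \<le> f y \<longleftrightarrow> padic_abs p x \<le> padic_abs p y"
    have "mult_equiv (padic_abs p) f"
      using H by (intro ord_to_me fm ms_mult[OF ms_padic_abs[OF p]]) blast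
    thus ?thesis using ms_padic_abs[OF p] by blast
  next
    fix p assume p: "prime p" and H: "\<forall>x y. f x \<le> f y \<longleftrightarrow> residual_abs p x \<le> residual_abs p y"
    have "mult_equiv (res_nn p) f"
      using H res_nn_le[of p] by (intro ord_to_me fm ms_mult[OF ms_res_nn[OF p]]) blast
    thus ?thesis using ms_res_nn[OF p] by blast
  next
    assume H: "\<forall>x y. f x \<le> f y \<longleftrightarrow> trivial_abs x \<le> trivial_abs y"
    have "mult_equiv trivial_abs f"
      using H by (intro ord_to_me fm ms_mult[OF ms_trivial_abs]) blast
    thus ?thesis using ms_trivial_abs by blast
  next
    assume H: "\<forall>x y. f x \<le> f y \<longleftrightarrow> arch_abs x \<le> arch_abs y"
    have "mult_equiv arch_abs f"
      using H by (intro ord_to_me fm ms_mult[OF ms_arch_abs]) blast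
    thus ?thesis using ms_arch_abs by blast
  qed
qed

theorem proposition3p10:
  shows "(\<forall>f :: int \<Rightarrow> 'r::tot_aura.
            tempered_growth TYPE('r) \<and> mult_seminorm f \<longrightarrow>
              (\<exists>p::nat. prime p \<and> (mult_equiv f (padic_abs p) \<or> mult_equiv f (residual_abs p)))
              \<or> mult_equiv f trivial_abs \<or> mult_equiv f arch_abs)
       \<and> (tempered_growth TYPE(nnreal) \<and> tempered_growth TYPE(bsf)
          \<and> (\<forall>p::nat. prime p \<longrightarrow> mult_seminorm (padic_abs p) \<and> mult_seminorm (residual_abs p))
          \<and> mult_seminorm trivial_abs \<and> mult_seminorm arch_abs)
       \<and> (\<forall>f :: int \<Rightarrow> 'r::tot_aura.
            tempered_growth TYPE('r) \<and> mult_seminorm f \<longrightarrow>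
              (\<exists>g :: int \<Rightarrow> nnreal. mult_seminorm g \<and> mult_equiv g f))"
  using part1 part3 tg_nnreal tg_bsf ms_padic_abs ms_residual_abs ms_trivial_abs ms_arch_abs
  by blast

end
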